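(* Let $\mathscr{R}$ be the class of rook graphs. Then the class of all (finite, simple, undirected) graphs is transducible from $\mathscr{R}$; that is, there is a transduction ${\mathsf T}$ such that every graph belongs to ${\mathsf T}(\mathscr{R})$.
   Context: A rook graph has vertex set $\{1,\ldots,a\}\times\{1,\ldots,b\}$ for some $a,b\in\mathbb{N}$, and two distinct vertices $(i,j),(i',j')$ are adjacent iff $i=i'$ or $j=j'$. Graphs are viewed as relational structures with universe the vertex set and one symmetric irreflexive binary relation $\mathsf{adj}$; a $C$-colored graph additionally has a unary predicate for each color in the finite set $C$ (colors are arbitrary vertex subsets, not necessarily disjoint). A transduction ${\mathsf T}$ consists of a finite set of colors $C$ and a first-order formula $\varphi(x,y)$ over the signature of $C$-colored graphs. For a graph $G$, ${\mathsf T}(G)$ is the set of all graphs obtained by: (1) adding the colors of $C$ to $G$ arbitrarily, yielding $G^+$; (2) forming the graph $\varphi(G^+)$ on vertex set $V(G)$ in which distinct $u,v$ are adjacent iff $G^+\models\varphi(u,v)$ or $G^+\models\varphi(v,u)$; (3) taking an arbitrary induced subgraph of $\varphi(G^+)$. For a class $\mathscr{C}$, ${\mathsf T}(\mathscr{C})=\bigcup_{G\in\mathscr{C}}{\mathsf T}(G)$, and a class $\mathscr{D}$ is transducible from $\mathscr{C}$ if $\mathscr{D}\subseteq{\mathsf T}(\mathscr{C})$ for some transduction ${\mathsf T}$. *)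

theory Defs
  imports Main
begin

datatype fo =
    Adj nat nat
  | Eq nat nat
  | Col nat nat
  | Neg fo
  | Conj fo fo
  | Ex nat fo

fun fv :: "fo \<Rightarrow> nat set" where
  "fv (Adj x y) = {x, y}"
| "fv (Eq x y) = {x, y}"
| "fv (Col c x) = {x}"
| "fv (Neg p) = fv p"
| "fv (Conj p q) = fv p \<union> fv q"
| "fv (Ex x p) = fv p - {x}"

fun colors :: "fo \<Rightarrow> nat set" where
  "colors (Adj x y) = {}"
| "colors (Eq x y) = {}"
| "colors (Col c x) = {c}"
| "colors (Neg p) = colors p"
| "colors (Conj p q) = colors p \<union> colors q"
| "colors (Ex x p) = colors p"

fun holds :: "'a set \<Rightarrow> ('a \<Rightarrow> 'a \<Rightarrow> bool) \<Rightarrow> (nat \<Rightarrow> 'a \<Rightarrow> bool) \<Rightarrow> (nat \<Rightarrow> 'a) \<Rightarrow> fo \<Rightarrow> bool" where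
  "holds U adj col \<nu> (Adj x y) = adj (\<nu> x) (\<nu> y)"
| "holds U adj col \<nu> (Eq x y) = (\<nu> x = \<nu> y)"
| "holds U adj col \<nu> (Col c x) = col c (\<nu> x)"
| "holds U adj col \<nu> (Neg p) = (\<not> holds U adj col \<nu> p)"
| "holds U adj col \<nu> (Conj p q) = (holds U adj col \<nu> p \<and> holds U adj col \<nu> q)"
| "holds U adj col \<nu> (Ex x p) = (\<exists>u\<in>U. holds U adj col (\<nu>(x := u)) p)"

text \<open>A transduction is a finite color set C together with a formula \<phi>(x,y)
  (free variables among 0 = x and 1 = y) using only colors from C.\<close>

definition is_transduction :: "nat set \<Rightarrow> fo \<Rightarrow> bool" where
  "is_transduction C \<phi> \<longleftrightarrow> finite C \<and> colors \<phi> \<subseteq> C \<and> fv \<phi> \<subseteq> {0, 1}"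

definition phi_at :: "'a set \<Rightarrow> ('a \<Rightarrow> 'a \<Rightarrow> bool) \<Rightarrow> (nat \<Rightarrow> 'a \<Rightarrow> bool) \<Rightarrow> fo \<Rightarrow> 'a \<Rightarrow> 'a \<Rightarrow> bool" where
  "phi_at U adj col \<phi> u v = holds U adj col (\<lambda>i. if i = 0 then u else v) \<phi>"

text \<open>T(G) for a graph G = (U, adj): all induced subgraphs (S, E) of \<phi>(G^+),
  where G^+ ranges over all colorings of U with the colors of C.
  Graphs are pairs (vertex set, adjacency predicate); adjacency is only
  meaningful on the vertex set (and set to False outside).\<close>

definition transduce :: "nat set \<Rightarrow> fo \<Rightarrow> 'a set \<Rightarrow> ('a \<Rightarrow> 'a \<Rightarrow> bool)
    \<Rightarrow> ('a set \<times> ('a \<Rightarrow> 'a \<Rightarrow> bool)) set" where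
  "transduce C \<phi> U adj =
     {(S, \<lambda>u v. u \<in> S \<and> v \<in> S \<and> u \<noteq> v \<and>
                 (phi_at U adj col \<phi> u v \<or> phi_at U adj col \<phi> v u))
      | S col. S \<subseteq> U \<and> (\<forall>c. c \<notin> C \<longrightarrow> col c = (\<lambda>_. False))
               \<and> (\<forall>c v. col c v \<longrightarrow> v \<in> U)}"

definition is_graph :: "'a set \<Rightarrow> ('a \<Rightarrow> 'a \<Rightarrow> bool) \<Rightarrow> bool" where
  "is_graph V E \<longleftrightarrow> finite V \<and> (\<forall>u\<in>V. \<forall>v\<in>V. E u v \<longrightarrow> E v u) \<and> (\<forall>u\<in>V. \<not> E u u)"

definition graph_iso :: "('a \<Rightarrow> 'b) \<Rightarrow> 'a set \<Rightarrow> ('a \<Rightarrow> 'a \<Rightarrow> bool) \<Rightarrow> 'b set \<Rightarrow> ('b \<Rightarrow> 'b \<Rightarrow> bool) \<Rightarrow> bool" where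
  "graph_iso f V E V' E' \<longleftrightarrow> bij_betw f V V' \<and> (\<forall>u\<in>V. \<forall>v\<in>V. E u v \<longleftrightarrow> E' (f u) (f v))"

definition rook_verts :: "nat \<Rightarrow> nat \<Rightarrow> (nat \<times> nat) set" where
  "rook_verts a b = {1..a} \<times> {1..b}"

definition rook_adj :: "nat \<times> nat \<Rightarrow> nat \<times> nat \<Rightarrow> bool" where
  "rook_adj p q \<longleftrightarrow> p \<noteq> q \<and> (fst p = fst q \<or> snd p = snd q)"

end

theory Submission
  imports Defs
begin

definition the_phi :: fo where
  "the_phi = Ex 2 (Conj (Col 0 2) (Conj (Adj 0 2) (Adj 1 2)))"

lemma phi_at_the_phi:
  "phi_at U adj col the_phi u v \<longleftrightarrow> (\<exists>z\<in>U. col 0 z \<and> adj u z \<and> adj v z)"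
  by (simp add: phi_at_def the_phi_def)

theorem lemma2p6:
  shows "\<exists>C \<phi>. is_transduction C \<phi> \<and>
           (\<forall>(V :: nat set) E. is_graph V E \<longrightarrow>
              (\<exists>a b S F f. (S, F) \<in> transduce C \<phi> (rook_verts a b) rook_adj
                           \<and> graph_iso f V E S F))"
proof (rule exI[of _ "{0}"], rule exI[of _ the_phi], rule conjI)
  show "is_transduction {0} the_phi"
    by (auto simp: is_transduction_def the_phi_def)
  show "\<forall>(V :: nat set) E. is_graph V E \<longrightarrow>
              (\<exists>a b S F f. (S, F) \<in> transduce {0} the_phi (rook_verts a b) rook_adj
                           \<and> graph_iso f V E S F)"
  proof (intro allI impI)
  fix V :: "nat set" and E
  assume g: "is_graph V E"
  define N where "N = Suc (Max V)"
  define U where "U = rook_verts N N"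
  define f where "f = (\<lambda>v::nat. (Suc v, Suc v))"
  define S where "S = f ` V"
  define col where "col = (\<lambda>(c::nat) (p::nat\<times>nat). c = 0 \<and> p \<in> U \<and> fst p - 1 \<in> V \<and> snd p - 1 \<in> V
                              \<and> E (fst p - 1) (snd p - 1))"
  define F where "F = (\<lambda>u v. u \<in> S \<and> v \<in> S \<and> u \<noteq> v \<and>
                 (phi_at U rook_adj col the_phi u v \<or> phi_at U rook_adj col the_phi v u))"
  have fin: "finite V" using g by (simp add: is_graph_def)
  have sym: "\<And>u v. u \<in> V \<Longrightarrow> v \<in> V \<Longrightarrow> E u v \<Longrightarrow> E v u" using g by (auto simp: is_graph_def)
  have irr: "\<And>u. u \<in> V \<Longrightarrow> \<not> E u u" using g by (auto simp: is_graph_def)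
  have inU: "\<And>u v. u \<in> V \<Longrightarrow> v \<in> V \<Longrightarrow> (Suc u, Suc v) \<in> U"
  proof -
    fix u v assume "u \<in> V" "v \<in> V"
    hence "u \<le> Max V" "v \<le> Max V" using fin by auto
    thus "(Suc u, Suc v) \<in> U" by (simp add: U_def rook_verts_def N_def)
  qed
  have SU: "S \<subseteq> U" using inU by (auto simp: S_def f_def)
  have "(S, F) \<in> transduce {0} the_phi U rook_adj"
    unfolding transduce_def F_def
  proof (rule CollectI, intro exI conjI)
    show "(S, \<lambda>u v. u \<in> S \<and> v \<in> S \<and> u \<noteq> v \<and>
                 (phi_at U rook_adj col the_phi u v \<or> phi_at U rook_adj col the_phi v u)) =
          (S, \<lambda>u v. u \<in> S \<and> v \<in> S \<and> u \<noteq> v \<and>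
                 (phi_at U rook_adj col the_phi u v \<or> phi_at U rook_adj col the_phi v u))" by (rule refl)
    show "S \<subseteq> U" by (rule SU)
    show "\<forall>c. c \<notin> {0} \<longrightarrow> col c = (\<lambda>_. False)" by (auto simp: col_def)
    show "\<forall>c v. col c v \<longrightarrow> v \<in> U" by (auto simp: col_def)
  qed
  moreover have "graph_iso f V E S F"
    unfolding graph_iso_def
  proof (intro conjI ballI)
    show "bij_betw f V S" by (auto simp: S_def f_def bij_betw_def inj_on_def)
    fix u v assume u: "u \<in> V" and v: "v \<in> V"
    show "E u v \<longleftrightarrow> F (f u) (f v)"
    proof
      assume e: "E u v"
      hence "u \<noteq> v" using irr u by auto
      moreover have "col 0 (Suc u, Suc v)" using inU[OF u v] u v e by (simp add: col_def)
      moreover have "rook_adj (f u) (Suc u, Suc v)" "rook_adj (f v) (Suc u, Suc v)"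
        using \<open>u \<noteq> v\<close> by (simp_all add: rook_adj_def f_def)
      moreover have "f u \<in> S" "f v \<in> S" "f u \<noteq> f v" using u v \<open>u \<noteq> v\<close> by (auto simp: S_def f_def)
      ultimately show "F (f u) (f v)"
        unfolding F_def phi_at_the_phi using inU[OF u v] by blast
    next
      assume "F (f u) (f v)"
      then obtain z where z: "col 0 z" "rook_adj (f u) z" "rook_adj (f v) z" and ne: "u \<noteq> v"
        by (auto simp: F_def phi_at_the_phi f_def)
      obtain i j where ij: "z = (i, j)" by (cases z)
      have c: "i - 1 \<in> V" "j - 1 \<in> V" "E (i - 1) (j - 1)" "i \<ge> 1" "j \<ge> 1"
        using z(1) by (auto simp: col_def ij U_def rook_verts_def)
      have "i = Suc u \<or> j = Suc u" "i = Suc v \<or> j = Suc v"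
        using z(2,3) unfolding rook_adj_def f_def ij by auto
      hence "(i = Suc u \<and> j = Suc v) \<or> (i = Suc v \<and> j = Suc u)"
        using ne by blast
      thus "E u v"
      proof
        assume "i = Suc u \<and> j = Suc v" thus "E u v" using c(3) by simp
      next
        assume "i = Suc v \<and> j = Suc u" hence "E v u" using c(3) by simp
        thus "E u v" using sym[OF v u] by blast
      qed
    qed
  qed
  ultimately show "\<exists>a b S F f. (S, F) \<in> transduce {0} the_phi (rook_verts a b) rook_adj
                           \<and> graph_iso f V E S F"
    unfolding U_def by blast
  qed
qed

end
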